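(* Let $\{\widehat{\mathcal G}_N\}_N$ be a family of directed acyclic graphs on node sets $\{1,\dots,N\}$ with bounded diameter, in which the reference node $N$ is a common ancestor of all nodes, and let $\mathbf H,\mathbf M$ be the associated matrices defined in the context. Then the condition $$\limsup_{N\to\infty}\ \sup_{\mathbf A:\|\mathbf A\|_\infty\le1}\ \|\mathbf M^{-1}(\mathbf H\odot\mathbf A)\mathbf 1\|_\infty<\infty$$ is satisfied if one of the following three conditions is met: (i) all paths from any node to the reference node have bounded length; (ii) $\sup_i\rho_i^-<\infty$; (iii) a fraction bounded away from $0$ of the in-neighbors of any node is $(\tau,h)$-proximal to the reference node, for some $\tau>0$ and $h<\infty$.
   Context: For a directed graph on $\{1,\dots,N\}$, $\mathcal N_i^-$ denotes the set of in-neighbors of node $i$ and $\rho_i^-=|\mathcal N_i^-|$. In this directed setting the least-squares quality estimates are defined by $\widehat q_N=0$ and $\widehat q_i=\sum_{j\in\mathcal N_i^-}\frac{\widehat q_j+\widehat d_{i,j}}{\rho_i^-}$ for $i<N$; correspondingly $[\mathbf H]_{i,j}=1/\rho_i^-$ if $i<N$ and $j\in\mathcal N_i^-$, and $[\mathbf H]_{i,j}=0$ otherwise, and $\mathbf M=\mathbf I-\mathbf H$, so that $\widehat{\mathbf q}=\mathbf M^{-1}(\mathbf H\odot\widehat{\mathbf D})\mathbf 1$. Here $\odot$ is the Hadamard product, $\mathbf 1$ the all-ones vector, $\mathbf A=\{a_{i,j}\}$ ranges over real $N\times N$ matrices with $\|\mathbf A\|_\infty=\sup_{i,j}|a_{i,j}|$,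 and $\|\cdot\|_\infty$ of a vector is its maximum absolute entry. The random walk on such a graph starting at node $i$ moves from the current node $u$ to a uniformly random node of $\mathcal N_u^-$ and stops upon hitting node $N$. Definition: given a family of graphs $\{\mathcal G_N\}_N$, a node $i$ is proximal to the reference node $N$ with parameters $(\tau,h)$ if the random walk starting from $i$ reaches $N$ within $h$ hops with a probability that is asymptotically (in $N$) bounded below by $\tau$. *)

theory Defs
  imports "Jordan_Normal_Form.Matrix" "HOL-Library.Extended_Real" "HOL-Library.Liminf_Limsup"
begin

text \<open>A directed graph on nodes 1..N is given by an edge predicate E, where
  E j i means there is a directed edge from j to i (so j is an in-neighbor of i).\<close>

definition in_nbrs :: "(nat \<Rightarrow> nat \<Rightarrow> bool) \<Rightarrow> nat \<Rightarrow> nat set" where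
  "in_nbrs E i = {j. E j i}"

definition rho_in :: "(nat \<Rightarrow> nat \<Rightarrow> bool) \<Rightarrow> nat \<Rightarrow> nat" where
  "rho_in E i = card (in_nbrs E i)"

definition digraph_on :: "nat \<Rightarrow> (nat \<Rightarrow> nat \<Rightarrow> bool) \<Rightarrow> bool" where
  "digraph_on N E \<longleftrightarrow> (\<forall>j i. E j i \<longrightarrow> j \<in> {1..N} \<and> i \<in> {1..N})"

definition acyclic_graph :: "(nat \<Rightarrow> nat \<Rightarrow> bool) \<Rightarrow> bool" where
  "acyclic_graph E \<longleftrightarrow> (\<forall>v. \<not> E\<^sup>+\<^sup>+ v v)"

text \<open>A directed walk: a nonempty list of nodes with consecutive edges;
  its length (number of hops) is length xs - 1.\<close>
definition dwalk :: "(nat \<Rightarrow> nat \<Rightarrow> bool) \<Rightarrow> nat list \<Rightarrow> bool" where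
  "dwalk E xs \<longleftrightarrow> xs \<noteq> [] \<and> (\<forall>k. Suc k < length xs \<longrightarrow> E (xs ! k) (xs ! Suc k))"

definition diam_le :: "(nat \<Rightarrow> nat \<Rightarrow> bool) \<Rightarrow> nat \<Rightarrow> bool" where
  "diam_le E D \<longleftrightarrow> (\<forall>u v. E\<^sup>*\<^sup>* u v \<longrightarrow>
     (\<exists>xs. dwalk E xs \<and> hd xs = u \<and> last xs = v \<and> length xs \<le> Suc D))"

text \<open>Probability that the random walk (moving from u to a uniformly random
  in-neighbor of u, stopping at the reference node N) started at i reaches N
  within h hops.\<close>
fun reach_prob :: "nat \<Rightarrow> (nat \<Rightarrow> nat \<Rightarrow> bool) \<Rightarrow> nat \<Rightarrow> nat \<Rightarrow> real" where
  "reach_prob N E 0 i = (if i = N then 1 else 0)"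
| "reach_prob N E (Suc h) i =
     (if i = N then 1
      else if rho_in E i = 0 then 0
      else (\<Sum>j\<in>in_nbrs E i. reach_prob N E h j) / real (rho_in E i))"

text \<open>Matrices (0-based JNF indices: row/column index k corresponds to node k+1).\<close>
definition H_mat :: "nat \<Rightarrow> (nat \<Rightarrow> nat \<Rightarrow> bool) \<Rightarrow> real mat" where
  "H_mat N E = mat N N (\<lambda>(i, j).
     if Suc i < N \<and> Suc j \<in> in_nbrs E (Suc i) then 1 / real (rho_in E (Suc i)) else 0)"

definition M_mat :: "nat \<Rightarrow> (nat \<Rightarrow> nat \<Rightarrow> bool) \<Rightarrow> real mat" where
  "M_mat N E = 1\<^sub>m N - H_mat N E"

definition mat_inv :: "nat \<Rightarrow> real mat \<Rightarrow> real mat" where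
  "mat_inv n A = (THE B. B \<in> carrier_mat n n \<and> A * B = 1\<^sub>m n \<and> B * A = 1\<^sub>m n)"

definition hadamard :: "real mat \<Rightarrow> real mat \<Rightarrow> real mat" where
  "hadamard A B = mat (dim_row A) (dim_col A) (\<lambda>ij. A $$ ij * B $$ ij)"

definition vec_sup_norm :: "real vec \<Rightarrow> real" where
  "vec_sup_norm v = Max (insert 0 {\<bar>v $ i\<bar> | i. i < dim_vec v})"

definition mat_sup_entry :: "real mat \<Rightarrow> real" where
  "mat_sup_entry A = Max (insert 0 {\<bar>A $$ (i, j)\<bar> | i j. i < dim_row A \<and> j < dim_col A})"

definition sens :: "nat \<Rightarrow> (nat \<Rightarrow> nat \<Rightarrow> bool) \<Rightarrow> ereal" where
  "sens N E = (SUP A \<in> {A. A \<in> carrier_mat N N \<and> mat_sup_entry A \<le> 1}.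
      ereal (vec_sup_norm (mat_inv N (M_mat N E) *\<^sub>v (hadamard (H_mat N E) A *\<^sub>v vec N (\<lambda>_. 1)))))"

end

theory Submission
  imports Defs "Jordan_Normal_Form.Determinant"
begin

definition Top :: "nat \<Rightarrow> (nat \<Rightarrow> nat \<Rightarrow> bool) \<Rightarrow> (nat \<Rightarrow> real) \<Rightarrow> nat \<Rightarrow> real" where
  "Top N E g i = (if i = N then 0 else (\<Sum>j\<in>in_nbrs E i. g j) / real (rho_in E i))"

fun Tn :: "nat \<Rightarrow> (nat \<Rightarrow> nat \<Rightarrow> bool) \<Rightarrow> nat \<Rightarrow> (nat \<Rightarrow> real) \<Rightarrow> nat \<Rightarrow> real" where
  "Tn N E 0 g = g"
| "Tn N E (Suc k) g = Top N E (Tn N E k g)"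

lemma nbrs_sub: "digraph_on N E \<Longrightarrow> in_nbrs E i \<subseteq> {1..N}"
  unfolding digraph_on_def in_nbrs_def by auto

lemma nbrs_fin: "digraph_on N E \<Longrightarrow> finite (in_nbrs E i)"
  by (meson finite_atLeastAtMost finite_subset nbrs_sub)

lemma Top_mono:
  assumes "digraph_on N E" "\<And>j. j \<in> {1..N} \<Longrightarrow> g j \<le> g' j"
  shows "Top N E g i \<le> Top N E g' i"
proof -
  have "(\<Sum>j\<in>in_nbrs E i. g j) \<le> (\<Sum>j\<in>in_nbrs E i. g' j)"
  proof (rule sum_mono)
    fix j assume "j \<in> in_nbrs E i"
    then have "j \<in> {1..N}" using nbrs_sub[OF assms(1), of i] by blast
    then show "g j \<le> g' j" by (rule assms(2))
  qed
  then show ?thesis unfolding Top_def by (auto intro: divide_right_mono)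
qed

lemma Top_nonneg:
  assumes "digraph_on N E" "\<And>j. j \<in> {1..N} \<Longrightarrow> 0 \<le> g j"
  shows "0 \<le> Top N E g i"
  using assms nbrs_sub[OF assms(1), of i] unfolding Top_def
  by (auto intro!: divide_nonneg_nonneg sum_nonneg)

lemma Top_const:
  assumes "digraph_on N E" "0 \<le> c"
  shows "Top N E (\<lambda>_. c) i \<le> c"
proof -
  have "(\<Sum>j\<in>in_nbrs E i. c) / real (rho_in E i) \<le> c"
    using assms by (cases "rho_in E i = 0") (auto simp: rho_in_def)
  then show ?thesis using assms unfolding Top_def by auto
qed

lemma Top_scale: "Top N E (\<lambda>j. c * g j) i = c * Top N E g i"
  unfolding Top_def by (simp add: sum_distrib_left)

lemma Top_add: "Top N E (\<lambda>j. g j + g' j) i = Top N E g i + Top N E g' i"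
  unfolding Top_def by (simp add: sum.distrib add_divide_distrib)

lemma Top_abs:
  assumes "digraph_on N E"
  shows "\<bar>Top N E g i\<bar> \<le> Top N E (\<lambda>j. \<bar>g j\<bar>) i"
  unfolding Top_def by (auto simp: abs_div_pos intro!: divide_right_mono sum_abs)

lemma Tn_mono:
  assumes "digraph_on N E" "\<And>j. j \<in> {1..N} \<Longrightarrow> g j \<le> g' j"
  shows "i \<in> {1..N} \<Longrightarrow> Tn N E k g i \<le> Tn N E k g' i"
  using assms(2) by (induction k arbitrary: i) (auto intro!: Top_mono[OF assms(1)])

lemma Tn_scale: "Tn N E k (\<lambda>j. c * g j) i = c * Tn N E k g i"
proof (induction k arbitrary: i)
  case (Suc k)
  then show ?case using Top_scale[of N E c "Tn N E k g" i] by (simp add: Suc[symmetric])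
qed auto

lemma Tn_nonneg:
  assumes "digraph_on N E" "\<And>j. j \<in> {1..N} \<Longrightarrow> 0 \<le> g j"
  shows "i \<in> {1..N} \<Longrightarrow> 0 \<le> Tn N E k g i"
  using assms(2) by (induction k arbitrary: i) (auto intro!: Top_nonneg[OF assms(1)])

lemma reach_nonneg: "0 \<le> reach_prob N E h i"
  by (induction h arbitrary: i) (auto intro!: divide_nonneg_nonneg sum_nonneg)

lemma aux_div: "a + b \<le> (r::real) \<Longrightarrow> 0 < r \<Longrightarrow> a / r + b / r \<le> 1"
  by (simp add: add_divide_distrib[symmetric] divide_le_eq)

lemma Tn_reach:
  assumes "digraph_on N E"
  shows "Tn N E (Suc h) (\<lambda>_. 1) i + reach_prob N E h i \<le> 1"
proof (induction h arbitrary: i)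
  case 0
  show ?case using Top_const[OF assms, of 1 i] by (auto simp: Top_def)
next
  case (Suc h)
  show ?case
  proof (cases "i = N \<or> rho_in E i = 0")
    case True
    then show ?thesis by (auto simp: Top_def)
  next
    case False
    have "(\<Sum>j\<in>in_nbrs E i. Tn N E (Suc h) (\<lambda>_. 1) j) + (\<Sum>j\<in>in_nbrs E i. reach_prob N E h j)
       \<le> (\<Sum>j\<in>in_nbrs E i. 1)"
      unfolding sum.distrib[symmetric] by (intro sum_mono Suc)
    then have "(\<Sum>j\<in>in_nbrs E i. Tn N E (Suc h) (\<lambda>_. 1) j) + (\<Sum>j\<in>in_nbrs E i. reach_prob N E h j)
       \<le> real (rho_in E i)" by (simp add: rho_in_def)
    have eq: "Tn N E (Suc (Suc h)) (\<lambda>_. 1) i = (\<Sum>j\<in>in_nbrs E i. Tn N E (Suc h) (\<lambda>_. 1) j) / real (rho_in E i)"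
    proof -
      have "Tn N E (Suc (Suc h)) (\<lambda>_. 1) i = Top N E (Tn N E (Suc h) (\<lambda>_. 1)) i" by simp
      also have "\<dots> = (\<Sum>j\<in>in_nbrs E i. Tn N E (Suc h) (\<lambda>_. 1) j) / real (rho_in E i)"
        unfolding Top_def using False by (simp del: Tn.simps)
      finally show ?thesis .
    qed
    have eq2: "reach_prob N E (Suc h) i = (\<Sum>j\<in>in_nbrs E i. reach_prob N E h j) / real (rho_in E i)"
      using False by (simp del: Tn.simps)
    show ?thesis unfolding eq eq2 using False \<open>_ \<le> real (rho_in E i)\<close>
      by (intro aux_div) auto
  qed
qed

lemma iter_bound:
  assumes dg: "digraph_on N E" and nn: "\<And>j. j \<in> {1..N} \<Longrightarrow> 0 \<le> g j"
    and sub: "\<And>i. i \<in> {1..N} \<Longrightarrow> g i \<le> Top N E g i + \<beta>" and b: "0 \<le> \<beta>"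
  shows "i \<in> {1..N} \<Longrightarrow> g i \<le> Tn N E k g i + real k * \<beta>"
proof (induction k arbitrary: i)
  case (Suc k)
  have "g i \<le> Top N E g i + \<beta>" using sub Suc by auto
  also have "Top N E g i \<le> Top N E (\<lambda>j. Tn N E k g j + real k * \<beta>) i"
    using Suc.IH by (intro Top_mono[OF dg]) auto
  also have "\<dots> = Top N E (Tn N E k g) i + Top N E (\<lambda>_. real k * \<beta>) i"
    by (rule Top_add)
  also have "Top N E (\<lambda>_. real k * \<beta>) i \<le> real k * \<beta>"
    using b by (intro Top_const[OF dg]) auto
  finally show ?case by (simp add: algebra_simps)
qed simp


lemma main_bound:
  assumes dg: "digraph_on N E" and p: "0 < p"
    and reach: "\<And>i. i \<in> {1..N} \<Longrightarrow> p \<le> reach_prob N E h i"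
    and nn: "\<And>j. j \<in> {1..N} \<Longrightarrow> 0 \<le> g j"
    and sub: "\<And>i. i \<in> {1..N} \<Longrightarrow> g i \<le> Top N E g i + \<beta>" and b: "0 \<le> \<beta>"
    and i: "i \<in> {1..N}"
  shows "g i \<le> real (Suc h) * \<beta> / p"
proof -
  define Gm where "Gm = Max (g ` {1..N})"
  have ne: "{1..N} \<noteq> {}" using i by auto
  have gle: "g j \<le> Gm" if "j \<in> {1..N}" for j unfolding Gm_def using that by auto
  have Gnn: "0 \<le> Gm" using gle[OF i] nn[OF i] by linarith
  have key: "g j \<le> Gm * (1 - p) + real (Suc h) * \<beta>" if j: "j \<in> {1..N}" for j
  proof -
    have "g j \<le> Tn N E (Suc h) g j + real (Suc h) * \<beta>"
      using iter_bound[OF dg nn sub b j] by blast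
    also have "Tn N E (Suc h) g j \<le> Tn N E (Suc h) (\<lambda>_. Gm * 1) j"
      using gle by (intro Tn_mono[OF dg _ j]) auto
    also have "\<dots> = Gm * Tn N E (Suc h) (\<lambda>_. 1) j"
      using Tn_scale[of N E "Suc h" Gm "\<lambda>_. 1" j] by simp
    also have "Gm * Tn N E (Suc h) (\<lambda>_. 1) j \<le> Gm * (1 - p)"
      using Tn_reach[OF dg, of h j] reach[OF j] Gnn by (intro mult_left_mono) auto
    finally show ?thesis by simp
  qed
  have "Gm \<in> g ` {1..N}" unfolding Gm_def using ne by (intro Max_in) auto
  then obtain i0 where i0: "i0 \<in> {1..N}" "g i0 = Gm" by auto
  have k0: "Gm \<le> Gm * (1 - p) + real (Suc h) * \<beta>" using key[OF i0(1)] i0(2) by simp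
  have "Gm * (1 - p) = Gm - Gm * p" by (simp add: right_diff_distrib)
  then have "Gm * p \<le> real (Suc h) * \<beta>" using k0 by linarith
  then have "Gm \<le> real (Suc h) * \<beta> / p" using p by (simp add: pos_le_divide_eq)
  then show ?thesis using gle[OF i] by linarith
qed

lemma H_carrier: "H_mat N E \<in> carrier_mat N N"
  unfolding H_mat_def by simp

lemma M_carrier: "M_mat N E \<in> carrier_mat N N"
  unfolding M_mat_def using H_carrier[of N E] by (rule minus_carrier_mat)

lemma nbrs_reindex:
  assumes dg: "digraph_on N E"
  shows "in_nbrs E k = Suc ` {j \<in> {0..<N}. Suc j \<in> in_nbrs E k}"
proof
  show "in_nbrs E k \<subseteq> Suc ` {j \<in> {0..<N}. Suc j \<in> in_nbrs E k}"
  proof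
    fix x assume x: "x \<in> in_nbrs E k"
    then have "x \<in> {1..N}" using nbrs_sub[OF dg] by blast
    then have "x = Suc (x - 1)" "x - 1 < N" by auto
    then show "x \<in> Suc ` {j \<in> {0..<N}. Suc j \<in> in_nbrs E k}" using x
      by (metis (mono_tags, lifting) atLeastLessThan_iff image_eqI mem_Collect_eq zero_le)
  qed
qed auto

lemma H_mult_vec:
  assumes dg: "digraph_on N E" and v: "v \<in> carrier_vec N" and i: "i < N"
  shows "(H_mat N E *\<^sub>v v) $ i = Top N E (\<lambda>k. v $ (k - 1)) (Suc i)"
proof -
  let ?S = "in_nbrs E (Suc i)"
  let ?r = "real (rho_in E (Suc i))"
  have "(H_mat N E *\<^sub>v v) $ i = (\<Sum>j\<in>{0..<N}. H_mat N E $$ (i, j) * v $ j)"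
    using v i H_carrier[of N E] by (simp add: scalar_prod_def)
  also have "\<dots> = (\<Sum>j\<in>{0..<N}. (if Suc i < N \<and> Suc j \<in> ?S then 1 / ?r else 0) * v $ j)"
    using i by (intro sum.cong) (auto simp: H_mat_def)
  also have "\<dots> = Top N E (\<lambda>k. v $ (k - 1)) (Suc i)"
  proof (cases "Suc i < N")
    case False
    then have "Suc i = N" using i by simp
    then show ?thesis using False by (simp add: Top_def)
  next
    case True
    have "(\<Sum>j\<in>{0..<N}. (if Suc i < N \<and> Suc j \<in> ?S then 1 / ?r else 0) * v $ j)
        = (\<Sum>j\<in>{0..<N}. if Suc j \<in> ?S then v $ j / ?r else 0)"
      using True by (intro sum.cong) auto
    also have "\<dots> = (\<Sum>j\<in>{j \<in> {0..<N}. Suc j \<in> ?S}. v $ j / ?r)"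
      by (simp only: sum.inter_filter[OF finite_atLeastLessThan])
    also have "\<dots> = (\<Sum>j\<in>{j \<in> {0..<N}. Suc j \<in> ?S}. v $ (Suc j - 1)) / ?r"
      by (simp add: sum_divide_distrib)
    also have "(\<Sum>j\<in>{j \<in> {0..<N}. Suc j \<in> ?S}. v $ (Suc j - 1)) = (\<Sum>k\<in>?S. v $ (k - 1))"
      by (subst nbrs_reindex[OF dg, of "Suc i"], subst sum.reindex) auto
    finally show ?thesis using True unfolding Top_def by simp
  qed
  finally show ?thesis .
qed

lemma vec_bound:
  assumes dg: "digraph_on N E" and p: "0 < p"
    and reach: "\<And>i. i \<in> {1..N} \<Longrightarrow> p \<le> reach_prob N E h i"
    and q: "q \<in> carrier_vec N" and bv: "b \<in> carrier_vec N"
    and bb: "\<And>i. i < N \<Longrightarrow> \<bar>b $ i\<bar> \<le> \<beta>" and beta: "0 \<le> \<beta>"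
    and eq: "M_mat N E *\<^sub>v q = b"
    and i: "i < N"
  shows "\<bar>q $ i\<bar> \<le> real (Suc h) * \<beta> / p"
proof -
  define g where "g k = \<bar>q $ (k - 1)\<bar>" for k
  have Mq: "M_mat N E *\<^sub>v q = q - H_mat N E *\<^sub>v q"
    unfolding M_mat_def using q H_carrier[of N E]
    by (simp add: minus_mult_distrib_mat_vec[of "1\<^sub>m N" N N "H_mat N E" q])
  have sub: "g k \<le> Top N E g k + \<beta>" if k: "k \<in> {1..N}" for k
  proof -
    obtain i where ki: "k = Suc i" and i: "i < N" using k by (cases k) auto
    have "q $ i - (H_mat N E *\<^sub>v q) $ i = b $ i"
    proof -
      have "b $ i = (q - H_mat N E *\<^sub>v q) $ i" using eq Mq by simp
      also have "\<dots> = q $ i - (H_mat N E *\<^sub>v q) $ i"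
        using i q H_carrier[of N E] by simp
      finally show ?thesis by simp
    qed
    then have "q $ i = Top N E (\<lambda>k. q $ (k - 1)) (Suc i) + b $ i"
      using H_mult_vec[OF dg q i] by simp
    then have "\<bar>q $ i\<bar> \<le> \<bar>Top N E (\<lambda>k. q $ (k - 1)) (Suc i)\<bar> + \<beta>"
      using bb[OF i] by linarith
    also have "\<bar>Top N E (\<lambda>k. q $ (k - 1)) (Suc i)\<bar> \<le> Top N E g (Suc i)"
      unfolding g_def by (rule Top_abs[OF dg])
    finally show ?thesis unfolding ki g_def by simp
  qed
  have "g (Suc i) \<le> real (Suc h) * \<beta> / p"
    by (rule main_bound[OF dg p reach _ sub beta]) (use i in \<open>auto simp: g_def\<close>)
  then show ?thesis by (simp add: g_def)
qed

lemma M_inv: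
  assumes dg: "digraph_on N E" and p: "0 < p"
    and reach: "\<And>i. i \<in> {1..N} \<Longrightarrow> p \<le> reach_prob N E h i"
  shows "mat_inv N (M_mat N E) \<in> carrier_mat N N \<and> M_mat N E * mat_inv N (M_mat N E) = 1\<^sub>m N"
proof -
  have Mc: "M_mat N E \<in> carrier_mat N N" by (rule M_carrier)
  have "det (M_mat N E) \<noteq> 0"
  proof
    assume "det (M_mat N E) = 0"
    then obtain v where v: "v \<in> carrier_vec N" "v \<noteq> 0\<^sub>v N" "M_mat N E *\<^sub>v v = 0\<^sub>v N"
      using det_0_iff_vec_prod_zero_field[OF Mc] by auto
    have "v = 0\<^sub>v N"
    proof (rule eq_vecI)
      fix i assume i: "i < dim_vec (0\<^sub>v N :: real vec)"
      then have i': "i < N" by simp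
      have "\<bar>v $ i\<bar> \<le> real (Suc h) * 0 / p"
        by (rule vec_bound[OF dg p reach v(1) _ _ _ v(3) i']) auto
      then show "v $ i = 0\<^sub>v N $ i" using i' by simp
    qed (use v in auto)
    with v(2) show False by simp
  qed
  then have "M_mat N E \<in> Units (ring_mat TYPE(real) N ())"
    by (rule det_non_zero_imp_unit[OF Mc])
  then obtain B where B: "B \<in> carrier_mat N N" "B * M_mat N E = 1\<^sub>m N" "M_mat N E * B = 1\<^sub>m N"
    unfolding Units_def ring_mat_def by auto
  have "mat_inv N (M_mat N E) = B"
    unfolding mat_inv_def
  proof (rule the_equality)
    show "B \<in> carrier_mat N N \<and> M_mat N E * B = 1\<^sub>m N \<and> B * M_mat N E = 1\<^sub>m N" using B by auto
  next
    fix B' assume B': "B' \<in> carrier_mat N N \<and> M_mat N E * B' = 1\<^sub>m N \<and> B' * M_mat N E = 1\<^sub>m N"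
    have "B' = (B * M_mat N E) * B'" using B' B left_mult_one_mat[of B' N N] by simp
    also have "\<dots> = B * (M_mat N E * B')"
    proof -
      have B'c: "B' \<in> carrier_mat N N" using B' by simp
      show ?thesis by (rule assoc_mult_mat[OF B(1) Mc B'c])
    qed
    also have "\<dots> = B" using B' B by simp
    finally show "B' = B" .
  qed
  then show ?thesis using B by simp
qed

lemma entry_le:
  assumes "A \<in> carrier_mat N N" "i < N" "j < N"
  shows "\<bar>A $$ (i, j)\<bar> \<le> mat_sup_entry A"
proof -
  have eq: "{\<bar>A $$ (i, j)\<bar> | i j. i < dim_row A \<and> j < dim_col A}
      = (\<lambda>(i, j). \<bar>A $$ (i, j)\<bar>) ` ({..<dim_row A} \<times> {..<dim_col A})" by auto
  have fin: "finite {\<bar>A $$ (i, j)\<bar> | i j. i < dim_row A \<and> j < dim_col A}"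
    unfolding eq by simp
  show ?thesis unfolding mat_sup_entry_def
  proof (rule Max_ge)
    show "finite (insert 0 {\<bar>A $$ (i, j)\<bar> | i j. i < dim_row A \<and> j < dim_col A})"
      using fin by (rule finite.insertI)
    show "\<bar>A $$ (i, j)\<bar> \<in> insert 0 {\<bar>A $$ (i, j)\<bar> | i j. i < dim_row A \<and> j < dim_col A}"
      using assms by auto
  qed
qed

lemma norm_le:
  assumes "0 \<le> C" "\<And>i. i < dim_vec v \<Longrightarrow> \<bar>v $ i\<bar> \<le> C"
  shows "vec_sup_norm v \<le> C"
proof -
  have eq: "{\<bar>v $ i\<bar> | i. i < dim_vec v} = (\<lambda>i. \<bar>v $ i\<bar>) ` {..<dim_vec v}" by auto
  show ?thesis unfolding vec_sup_norm_def
    by (rule Max.boundedI) (use assms in \<open>auto simp: eq\<close>)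
qed

lemma sens_bound:
  assumes dg: "digraph_on N E" and p: "0 < p"
    and reach: "\<And>i. i \<in> {1..N} \<Longrightarrow> p \<le> reach_prob N E h i"
  shows "sens N E \<le> ereal (real (Suc h) / p)"
  unfolding sens_def
proof (rule SUP_least)
  fix A assume A: "A \<in> {A. A \<in> carrier_mat N N \<and> mat_sup_entry A \<le> 1}"
  define B where "B = mat_inv N (M_mat N E)"
  define b where "b = hadamard (H_mat N E) A *\<^sub>v vec N (\<lambda>_. 1)"
  have Bc: "B \<in> carrier_mat N N" and MB: "M_mat N E * B = 1\<^sub>m N"
    using M_inv[OF dg p reach] unfolding B_def by auto
  have Hc: "H_mat N E \<in> carrier_mat N N" by (rule H_carrier)
  have bc: "b \<in> carrier_vec N" unfolding b_def hadamard_def carrier_vec_def using Hc by auto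
  have eq: "M_mat N E *\<^sub>v (B *\<^sub>v b) = b"
    using assoc_mult_mat_vec[OF M_carrier Bc bc, symmetric] MB bc by simp
  have bb: "\<bar>b $ i\<bar> \<le> 1" if i: "i < N" for i
  proof -
    have "b $ i = (\<Sum>j\<in>{0..<N}. H_mat N E $$ (i, j) * A $$ (i, j))"
      unfolding b_def hadamard_def using Hc i by (simp add: scalar_prod_def)
    also have "\<bar>\<dots>\<bar> \<le> (\<Sum>j\<in>{0..<N}. \<bar>H_mat N E $$ (i, j) * A $$ (i, j)\<bar>)"
      by (rule sum_abs)
    also have "\<dots> \<le> (\<Sum>j\<in>{0..<N}. H_mat N E $$ (i, j) * 1)"
    proof (rule sum_mono)
      fix j assume j: "j \<in> {0..<N}"
      have h0: "0 \<le> H_mat N E $$ (i, j)" using i j by (simp add: H_mat_def)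
      have "\<bar>A $$ (i, j)\<bar> \<le> 1" using entry_le[of A N i j] A i j by auto
      then show "\<bar>H_mat N E $$ (i, j) * A $$ (i, j)\<bar> \<le> H_mat N E $$ (i, j) * 1"
        using h0 mult_left_mono[of "\<bar>A $$ (i, j)\<bar>" 1 "H_mat N E $$ (i, j)"] by (simp add: abs_mult)
    qed
    also have "\<dots> = (H_mat N E *\<^sub>v vec N (\<lambda>_. 1)) $ i"
      using Hc i by (simp add: scalar_prod_def)
    also have "\<dots> = Top N E (\<lambda>k. vec N (\<lambda>_. 1) $ (k - 1)) (Suc i)"
      by (rule H_mult_vec[OF dg _ i]) simp
    also have "\<dots> \<le> Top N E (\<lambda>_. 1) (Suc i)"
      by (rule Top_mono[OF dg]) auto
    also have "\<dots> \<le> 1" by (rule Top_const[OF dg]) simp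
    finally show ?thesis .
  qed
  have "vec_sup_norm (B *\<^sub>v b) \<le> real (Suc h) * 1 / p"
  proof (rule norm_le)
    show "0 \<le> real (Suc h) * 1 / p" using p by simp
    fix i assume "i < dim_vec (B *\<^sub>v b)"
    then have i: "i < N" using Bc by simp
    show "\<bar>(B *\<^sub>v b) $ i\<bar> \<le> real (Suc h) * 1 / p"
      by (rule vec_bound[OF dg p reach mult_mat_vec_carrier[OF Bc bc] bc bb zero_le_one eq i])
  qed
  then show "ereal (vec_sup_norm (mat_inv N (M_mat N E) *\<^sub>v
      (hadamard (H_mat N E) A *\<^sub>v vec N (\<lambda>_. 1)))) \<le> ereal (real (Suc h) / p)"
    unfolding B_def[symmetric] b_def[symmetric] by simp
qed

lemma walk_single: "dwalk E xs \<Longrightarrow> length xs \<le> Suc 0 \<Longrightarrow> hd xs = last xs"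
  unfolding dwalk_def by (cases xs) auto

lemma walk_butlast:
  assumes w: "dwalk E xs" and l: "2 \<le> length xs"
  shows "dwalk E (butlast xs) \<and> hd (butlast xs) = hd xs \<and> E (last (butlast xs)) (last xs)
    \<and> length (butlast xs) = length xs - 1"
proof -
  have ne: "butlast xs \<noteq> []" using l by (cases xs) auto
  have w1: "dwalk E (butlast xs)" unfolding dwalk_def
  proof (intro conjI allI impI)
    show "butlast xs \<noteq> []" by (rule ne)
    fix k assume "Suc k < length (butlast xs)"
    then show "E (butlast xs ! k) (butlast xs ! Suc k)"
      using w unfolding dwalk_def by (simp add: nth_butlast)
  qed
  have "hd (butlast xs) = butlast xs ! 0" using ne by (simp add: hd_conv_nth)
  also have "\<dots> = xs ! 0" using ne by (metis length_greater_0_conv nth_butlast)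
  also have "\<dots> = hd xs" using l by (cases xs) auto
  finally have h: "hd (butlast xs) = hd xs" .
  have "last (butlast xs) = xs ! (length xs - 2)"
    using ne l by (simp add: last_conv_nth nth_butlast numeral_2_eq_2)
  moreover have "last xs = xs ! Suc (length xs - 2)"
    using l by (cases xs) (auto simp: last_conv_nth)
  moreover have "E (xs ! (length xs - 2)) (xs ! Suc (length xs - 2))"
    using w l unfolding dwalk_def by auto
  ultimately show ?thesis using w1 h by simp
qed

lemma walk_snoc:
  assumes w: "dwalk E xs" and e: "E (last xs) i"
  shows "dwalk E (xs @ [i]) \<and> hd (xs @ [i]) = hd xs \<and> last (xs @ [i]) = i"
proof -
  have ne: "xs \<noteq> []" using w unfolding dwalk_def by simp
  have "E ((xs @ [i]) ! k) ((xs @ [i]) ! Suc k)" if k: "Suc k < length (xs @ [i])" for k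
  proof (cases "Suc k < length xs")
    case True
    then show ?thesis using w unfolding dwalk_def by (simp add: nth_append)
  next
    case False
    then have kk: "k = length xs - 1" using k by simp
    then show ?thesis using e ne by (simp add: nth_append last_conv_nth)
  qed
  then show ?thesis using ne unfolding dwalk_def by auto
qed

lemma reach_ii:
  assumes dg: "digraph_on N E" and C: "1 \<le> C"
    and rb: "\<And>i. i \<in> {1..N} \<Longrightarrow> real (rho_in E i) \<le> C"
  shows "dwalk E xs \<Longrightarrow> hd xs = N \<Longrightarrow> last xs = i \<Longrightarrow> i \<in> {1..N} \<Longrightarrow> length xs \<le> Suc h
    \<Longrightarrow> (1 / C) ^ h \<le> reach_prob N E h i"
proof (induction h arbitrary: xs i)
  case 0
  then have "i = N" using walk_single[of E xs] by simp
  then show ?case by simp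
next
  case (Suc h)
  show ?case
  proof (cases "i = N")
    case True
    have "(1 / C) ^ Suc h \<le> 1" using C by (intro power_le_one) auto
    then show ?thesis using True by simp
  next
    case False
    have l: "2 \<le> length xs"
    proof (rule ccontr)
      assume "\<not> 2 \<le> length xs"
      then have "hd xs = last xs" using walk_single[OF Suc.prems(1)] by simp
      then show False using False Suc.prems by simp
    qed
    note wb = walk_butlast[OF Suc.prems(1) l]
    define j where "j = last (butlast xs)"
    have ej: "E j i" using wb Suc.prems(3) unfolding j_def by simp
    have jn: "j \<in> in_nbrs E i" using ej by (simp add: in_nbrs_def)
    have jV: "j \<in> {1..N}" using jn nbrs_sub[OF dg] by blast
    have IH: "(1 / C) ^ h \<le> reach_prob N E h j"
      using Suc.IH[of "butlast xs" j] wb Suc.prems jV unfolding j_def by auto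
    have fin: "finite (in_nbrs E i)" by (rule nbrs_fin[OF dg])
    have rpos: "0 < rho_in E i" using jn fin unfolding rho_in_def by (auto simp: card_gt_0_iff)
    have rC: "real (rho_in E i) \<le> C" using rb Suc.prems(4) by simp
    have sj: "reach_prob N E h j \<le> (\<Sum>k\<in>in_nbrs E i. reach_prob N E h k)"
      using fin jn by (intro member_le_sum) (auto simp: reach_nonneg)
    have "(1 / C) ^ Suc h = (1 / C) ^ h / C" by simp
    also have "\<dots> \<le> reach_prob N E h j / C"
      using IH C by (intro divide_right_mono) auto
    also have "\<dots> \<le> reach_prob N E h j / real (rho_in E i)"
      using rpos rC reach_nonneg[of N E h j] by (intro divide_left_mono) auto
    also have "\<dots> \<le> (\<Sum>k\<in>in_nbrs E i. reach_prob N E h k) / real (rho_in E i)"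
      using sj rpos by (intro divide_right_mono) auto
    also have "\<dots> = reach_prob N E (Suc h) i" using False rpos by simp
    finally show ?thesis .
  qed
qed

lemma reach_i:
  assumes dg: "digraph_on N E"
    and anc: "\<And>j. j \<in> {1..N} \<Longrightarrow> \<exists>xs. dwalk E xs \<and> hd xs = N \<and> last xs = j"
  shows "i \<in> {1..N} \<Longrightarrow> (\<forall>xs. dwalk E xs \<and> hd xs = N \<and> last xs = i \<longrightarrow> length xs \<le> Suc h)
    \<Longrightarrow> 1 \<le> reach_prob N E h i"
proof (induction h arbitrary: i)
  case 0
  obtain xs where xs: "dwalk E xs" "hd xs = N" "last xs = i" using anc[OF 0(1)] by blast
  then have "i = N" using walk_single[of E xs] 0(2) by auto
  then show ?case by simp
next
  case (Suc h)
  show ?case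
  proof (cases "i = N")
    case True
    then show ?thesis by simp
  next
    case False
    obtain xs where xs: "dwalk E xs" "hd xs = N" "last xs = i" using anc[OF Suc.prems(1)] by blast
    have l: "2 \<le> length xs"
    proof (rule ccontr)
      assume "\<not> 2 \<le> length xs"
      then have "hd xs = last xs" using walk_single[OF xs(1)] by simp
      then show False using False xs by simp
    qed
    note wb = walk_butlast[OF xs(1) l]
    have jn: "last (butlast xs) \<in> in_nbrs E i" using wb xs by (simp add: in_nbrs_def)
    have fin: "finite (in_nbrs E i)" by (rule nbrs_fin[OF dg])
    have rpos: "0 < rho_in E i" using jn fin unfolding rho_in_def by (auto simp: card_gt_0_iff)
    have each: "1 \<le> reach_prob N E h j" if j: "j \<in> in_nbrs E i" for j
    proof (rule Suc.IH)
      show "j \<in> {1..N}" using j nbrs_sub[OF dg] by blast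
      show "\<forall>ys. dwalk E ys \<and> hd ys = N \<and> last ys = j \<longrightarrow> length ys \<le> Suc h"
      proof (intro allI impI)
        fix ys assume ys: "dwalk E ys \<and> hd ys = N \<and> last ys = j"
        have "E (last ys) i" using ys j by (simp add: in_nbrs_def)
        then have "dwalk E (ys @ [i]) \<and> hd (ys @ [i]) = N \<and> last (ys @ [i]) = i"
          using walk_snoc[of E ys i] ys by simp
        then have "length (ys @ [i]) \<le> Suc (Suc h)" using Suc.prems(2) by blast
        then show "length ys \<le> Suc h" by simp
      qed
    qed
    have "real (rho_in E i) = (\<Sum>k\<in>in_nbrs E i. 1)" by (simp add: rho_in_def)
    also have "\<dots> \<le> (\<Sum>k\<in>in_nbrs E i. reach_prob N E h k)" using each by (intro sum_mono) auto
    finally have "1 \<le> (\<Sum>k\<in>in_nbrs E i. reach_prob N E h k) / real (rho_in E i)"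
      using rpos by simp
    then show ?thesis using False rpos by simp
  qed
qed

lemma reach_iii:
  assumes dg: "digraph_on N E" and c: "0 < c" and tau: "0 < \<tau>"
    and anc: "\<And>j. j \<in> {1..N} \<Longrightarrow> \<exists>xs. dwalk E xs \<and> hd xs = N \<and> last xs = j"
    and frac: "\<And>i. i \<in> {1..N} \<Longrightarrow>
        c * real (rho_in E i) \<le> real (card {j \<in> in_nbrs E i. reach_prob N E h j \<ge> \<tau>})"
    and i: "i \<in> {1..N}"
  shows "min (c * \<tau>) 1 \<le> reach_prob N E (Suc h) i"
proof (cases "i = N")
  case True
  then show ?thesis by simp
next
  case False
  obtain xs where xs: "dwalk E xs" "hd xs = N" "last xs = i" using anc[OF i] by blast
  have l: "2 \<le> length xs"
  proof (rule ccontr)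
    assume "\<not> 2 \<le> length xs"
    then have "hd xs = last xs" using walk_single[OF xs(1)] by simp
    then show False using False xs by simp
  qed
  note wb = walk_butlast[OF xs(1) l]
  have jn: "last (butlast xs) \<in> in_nbrs E i" using wb xs by (simp add: in_nbrs_def)
  have fin: "finite (in_nbrs E i)" by (rule nbrs_fin[OF dg])
  have rpos: "0 < rho_in E i" using jn fin unfolding rho_in_def by (auto simp: card_gt_0_iff)
  define S where "S = {j \<in> in_nbrs E i. reach_prob N E h j \<ge> \<tau>}"
  have finS: "finite S" unfolding S_def using fin by simp
  have "\<tau> * (c * real (rho_in E i)) \<le> \<tau> * real (card S)"
    using frac[OF i] tau unfolding S_def by (intro mult_left_mono) auto
  also have "\<tau> * real (card S) = (\<Sum>j\<in>S. \<tau>)" by simp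
  also have "\<dots> \<le> (\<Sum>j\<in>S. reach_prob N E h j)" by (intro sum_mono) (auto simp: S_def)
  also have "\<dots> \<le> (\<Sum>j\<in>in_nbrs E i. reach_prob N E h j)"
    using fin by (intro sum_mono2) (auto simp: S_def reach_nonneg)
  finally have "c * \<tau> * real (rho_in E i) \<le> (\<Sum>j\<in>in_nbrs E i. reach_prob N E h j)"
    by (simp add: algebra_simps)
  then have "c * \<tau> \<le> (\<Sum>j\<in>in_nbrs E i. reach_prob N E h j) / real (rho_in E i)"
    using rpos by (simp add: pos_le_divide_eq)
  then show ?thesis using False rpos by simp
qed


theorem proposition3:
  fixes G :: "nat \<Rightarrow> nat \<Rightarrow> nat \<Rightarrow> bool"
  assumes graph: "\<And>N. N \<ge> 1 \<Longrightarrow> digraph_on N (G N)"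
    and dag: "\<And>N. N \<ge> 1 \<Longrightarrow> acyclic_graph (G N)"
    and bounded_diam: "\<exists>D. \<forall>N\<ge>1. diam_le (G N) D"
    and ancestor: "\<And>N i. N \<ge> 1 \<Longrightarrow> i \<in> {1..N} \<Longrightarrow> (G N)\<^sup>*\<^sup>* N i"
    and conds:
      "(\<exists>L. \<forall>N\<ge>1. \<forall>xs. dwalk (G N) xs \<and> hd xs = N \<longrightarrow> length xs \<le> Suc L)
       \<or> (\<exists>C. \<forall>N\<ge>1. \<forall>i\<in>{1..N}. rho_in (G N) i \<le> C)
       \<or> (\<exists>c::real. \<exists>\<tau>::real. \<exists>h::nat. \<exists>N0. c > 0 \<and> \<tau> > 0 \<and>
            (\<forall>N\<ge>N0. \<forall>i\<in>{1..N}.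
               real (card {j \<in> in_nbrs (G N) i. reach_prob N (G N) h j \<ge> \<tau>})
                 \<ge> c * real (rho_in (G N) i)))"
  shows "limsup (\<lambda>N. sens N (G N)) < \<infinity>"
  proof -
  obtain D where D: "\<forall>N\<ge>1. diam_le (G N) D" using bounded_diam by blast
  have walk: "\<exists>xs. dwalk (G N) xs \<and> hd xs = N \<and> last xs = i \<and> length xs \<le> Suc D"
    if "N \<ge> 1" "i \<in> {1..N}" for N i
  proof -
    have dl: "diam_le (G N) D" using D that(1) by blast
    have "(G N)\<^sup>*\<^sup>* N i" by (rule ancestor[OF that])
    from dl[unfolded diam_le_def, rule_format, OF this] show ?thesis .
  qed
  have anc: "\<exists>xs. dwalk (G N) xs \<and> hd xs = N \<and> last xs = i"
    if "N \<ge> 1" "i \<in> {1..N}" for N i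
    using walk[OF that] by blast
  have key: "\<exists>h p N1. 0 < (p::real) \<and> (\<forall>N\<ge>N1. 1 \<le> N \<and> (\<forall>i\<in>{1..N}. p \<le> reach_prob N (G N) h i))"
    using conds
  proof (elim disjE exE conjE)
    fix L assume L: "\<forall>N\<ge>1. \<forall>xs. dwalk (G N) xs \<and> hd xs = N \<longrightarrow> length xs \<le> Suc L"
    have "\<forall>N\<ge>1. 1 \<le> N \<and> (\<forall>i\<in>{1..N}. 1 \<le> reach_prob N (G N) L i)"
    proof (intro allI impI)
      fix N :: nat assume N: "1 \<le> N"
      have "1 \<le> reach_prob N (G N) L i" if i: "i \<in> {1..N}" for i
      proof -
        have ancN: "\<And>j. j \<in> {1..N} \<Longrightarrow> \<exists>xs. dwalk (G N) xs \<and> hd xs = N \<and> last xs = j"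
          using anc[OF N] by blast
        have LL: "\<forall>xs. dwalk (G N) xs \<and> hd xs = N \<longrightarrow> length xs \<le> Suc L"
          using spec[OF L, of N] N by (rule mp)
        have "\<forall>xs. dwalk (G N) xs \<and> hd xs = N \<and> last xs = i \<longrightarrow> length xs \<le> Suc L"
          using LL by blast
        note r = reach_i[OF graph[OF N] ancN i this]
        show ?thesis by (rule r)
      qed
      with N show "1 \<le> N \<and> (\<forall>i\<in>{1..N}. 1 \<le> reach_prob N (G N) L i)" by blast
    qed
    moreover have "(0::real) < 1" by simp
    ultimately show ?thesis by blast
  next
    fix C assume C: "\<forall>N\<ge>1. \<forall>i\<in>{1..N}. rho_in (G N) i \<le> C"
    define C' where "C' = max (real C) 1"
    have C'1: "1 \<le> C'" unfolding C'_def by simp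
    have "\<forall>N\<ge>1. 1 \<le> N \<and> (\<forall>i\<in>{1..N}. (1 / C') ^ D \<le> reach_prob N (G N) D i)"
    proof (intro allI impI)
      fix N :: nat assume N: "1 \<le> N"
      have "(1 / C') ^ D \<le> reach_prob N (G N) D i" if i: "i \<in> {1..N}" for i
      proof -
      obtain xs where xs: "dwalk (G N) xs" "hd xs = N" "last xs = i" "length xs \<le> Suc D"
        using walk[OF N i] by blast
      have rb: "real (rho_in (G N) j) \<le> C'" if "j \<in> {1..N}" for j
      proof -
        have "rho_in (G N) j \<le> C" using C N that by blast
        then show ?thesis unfolding C'_def by linarith
      qed
      show "(1 / C') ^ D \<le> reach_prob N (G N) D i"
        by (rule reach_ii[OF graph[OF N] C'1 rb xs(1) xs(2) xs(3) i xs(4)])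
      qed
      with N show "1 \<le> N \<and> (\<forall>i\<in>{1..N}. (1 / C') ^ D \<le> reach_prob N (G N) D i)" by blast
    qed
    moreover have "0 < (1 / C') ^ D" using C'1 by simp
    ultimately show ?thesis by blast
  next
    fix c \<tau> :: real and h N0 :: nat
    assume c: "0 < c" and tau: "0 < \<tau>"
      and F: "\<forall>N\<ge>N0. \<forall>i\<in>{1..N}. c * real (rho_in (G N) i)
          \<le> real (card {j \<in> in_nbrs (G N) i. \<tau> \<le> reach_prob N (G N) h j})"
    have "\<forall>N\<ge>max N0 1. 1 \<le> N \<and> (\<forall>i\<in>{1..N}. min (c * \<tau>) 1 \<le> reach_prob N (G N) (Suc h) i)"
    proof (intro allI impI)
      fix N :: nat assume NN: "max N0 1 \<le> N"
      then have N: "1 \<le> N" and N0: "N0 \<le> N" by auto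
      have "min (c * \<tau>) 1 \<le> reach_prob N (G N) (Suc h) i" if i: "i \<in> {1..N}" for i
      proof -
        have Fi: "\<forall>i\<in>{1..N}. c * real (rho_in (G N) i)
          \<le> real (card {j \<in> in_nbrs (G N) i. \<tau> \<le> reach_prob N (G N) h j})" using F N0 by blast
        have ancN: "\<And>j. j \<in> {1..N} \<Longrightarrow> \<exists>xs. dwalk (G N) xs \<and> hd xs = N \<and> last xs = j"
          using anc[OF N] by blast
        show ?thesis by (rule reach_iii[OF graph[OF N] c tau ancN _ i]) (use Fi in blast)+
      qed
      with N show "1 \<le> N \<and> (\<forall>i\<in>{1..N}. min (c * \<tau>) 1 \<le> reach_prob N (G N) (Suc h) i)" by blast
    qed
    moreover have "0 < min (c * \<tau>) 1" using c tau by simp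
    ultimately show ?thesis by blast
  qed
  then obtain h p N1 where p: "0 < (p::real)"
    and R: "\<forall>N\<ge>N1. 1 \<le> N \<and> (\<forall>i\<in>{1..N}. p \<le> reach_prob N (G N) h i)" by blast
  have "eventually (\<lambda>N. sens N (G N) \<le> ereal (real (Suc h) / p)) sequentially"
    unfolding eventually_sequentially
  proof (intro exI allI impI)
    fix N assume "N1 \<le> N"
    then have N: "1 \<le> N" and RN: "\<forall>i\<in>{1..N}. p \<le> reach_prob N (G N) h i" using R by auto
    show "sens N (G N) \<le> ereal (real (Suc h) / p)"
      by (rule sens_bound[OF graph[OF N] p]) (use RN in blast)
  qed
  then have "limsup (\<lambda>N. sens N (G N)) \<le> ereal (real (Suc h) / p)"
    by (rule Limsup_bounded)
  moreover have "ereal (real (Suc h) / p) < \<infinity>" by simp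
  ultimately show ?thesis by (rule le_less_trans)
qed


end
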